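(* Fix $x\in\{0,1\}^n$ with exactly $K$ ones and fix the incidence matrix $T$. Consider a right node $k$ of the SAFFRON construction, with measurement vector $z_k$. (i) The singleton test at node $k$ declares an item if and only if node $k$ is a singleton, and in that case the declared item is the unique defective item connected to node $k$. (ii) If node $k$ is a doubleton whose two defective items are $\ell_0$ and $\ell^*$, then the doubleton test at node $k$ with respect to $\ell_0$ declares exactly the item $\ell^*$. (iii) If node $k$ is connected to $\ell_0$ and to at least two other defective items, then the probability, over the random draw of $s_1,s_2$, that the doubleton test at node $k$ with respect to $\ell_0$ declares an item that is not one of the defective items connected to node $k$ is at most $1/n^2$.
   Context: Items are indexed by $[n]=\{1,\dots,n\}$ with $n=2^L$. The unknown support vector is $x\in\{0,1\}^n$ with $x_\ell=1$ iff item $\ell$ is defective; exactly $K$ items are defective. For $\ell\in[n]$, $b_\ell\in\{0,1\}^L$ denotes the $L$-bit binary representation of $\ell-1$, and $\overline{v}$ denotes the bitwise complement of a binary vector $v$. Two sequences $s_1=(i_1,\dots,i_n)$ and $s_2=(j_1,\dots,j_n)$ are drawn independently and uniformly at random from $[n]^n$. The signature of item $\ell$ is the vector $u_\ell=(b_\ell;\overline{b_\ell};b_{i_\ell};\overline{b_{i_\ell}};b_{j_\ell};\overline{b_{j_\ell}})\in\{0,1\}^{6L}$ (vertical concatenation). A bipartite graph has $n$ left nodes (the items) and $M$ right nodes, with incidence matrix $T\in\{0,1\}^{M\times n}$ ($T_{k\ell}=1$ iff item $\ell$ is connected to right node $k$). For each right node $k$ there are $6L$ tests: the $r$-th of them pools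 exactly the items $\ell$ with $T_{k\ell}=1$ and $(u_\ell)_r=1$, and its outcome is positive iff the pool contains a defective item. Hence the measurement vector of right node $k$ is $z_k=\bigvee_{\ell:\,T_{k\ell}x_\ell=1}u_\ell\in\{0,1\}^{6L}$ (bitwise OR; the zero vector if there is no such $\ell$). Write $z_k=(z_k^1;\dots;z_k^6)$ with each section $z_k^w\in\{0,1\}^L$, and $z^w_{k,t}$ for its $t$-th bit. A right node is a singleton if it is connected to exactly one defective item and a doubleton if it is connected to exactly two defective items. Singleton test at node $k$: if the Hamming weight of $z_k$ equals $3L$, declare defective the item $\ell$ with $b_\ell=z_k^1$; otherwise declare nothing. Doubleton test at node $k$ with respect to an item $\ell_0$ (already known to be defective, with $T_{k\ell_0}=1$): set $r^1=b_{\ell_0}$, $r^2=b_{i_{\ell_0}}$, $r^3=b_{j_{\ell_0}}$; for $w=1,2,3$ and $t=1,\dots,L$ let $c^w_t=z^{2w-1}_{k,t}$ if $r^w_t=0$ and $c^w_t=1-z^{2w}_{k,t}$ if $r^w_t=1$; let $\ell_w\in[n]$ be the index with $b_{\ell_w}=c^w$. If $i_{\ell_1}=\ell_2$ and $j_{\ell_1}=\ell_3$, declare item $\ell_1$ defective; otherwise declare nothing. *)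

theory Defs
  imports "HOL-Probability.Probability"
begin

(* Items are 1..n with n = 2^L.  Binary vectors of length m are functions
   nat => bool on positions 1..m (value False outside). *)

definition bin :: "nat \<Rightarrow> nat \<Rightarrow> nat \<Rightarrow> bool" where
  "bin L l t = (t \<in> {1..L} \<and> bit (l - 1) (t - 1))"

definition seqs :: "nat \<Rightarrow> (nat \<Rightarrow> nat) set" where
  "seqs L = PiE {1..2^L} (\<lambda>_. {1..2^L})"

(* signature u_l = (b_l; ~b_l; b_{i_l}; ~b_{i_l}; b_{j_l}; ~b_{j_l}) in {0,1}^{6L};
   position r = (w-1)*L + t lies in section w, bit t *)
definition sig :: "nat \<Rightarrow> (nat \<Rightarrow> nat) \<Rightarrow> (nat \<Rightarrow> nat) \<Rightarrow> nat \<Rightarrow> nat \<Rightarrow> bool" where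
  "sig L i j l r = (r \<in> {1..6*L} \<and>
     (let w = (r - 1) div L + 1; t = (r - 1) mod L + 1 in
      if w = 1 then bin L l t
      else if w = 2 then \<not> bin L l t
      else if w = 3 then bin L (i l) t
      else if w = 4 then \<not> bin L (i l) t
      else if w = 5 then bin L (j l) t
      else \<not> bin L (j l) t))"

definition meas :: "nat \<Rightarrow> (nat \<Rightarrow> nat \<Rightarrow> bool) \<Rightarrow> (nat \<Rightarrow> bool) \<Rightarrow>
    (nat \<Rightarrow> nat) \<Rightarrow> (nat \<Rightarrow> nat) \<Rightarrow> nat \<Rightarrow> nat \<Rightarrow> bool" where
  "meas L T x i j k r = (\<exists>l\<in>{1..2^L}. T k l \<and> x l \<and> sig L i j l r)"

definition sec :: "nat \<Rightarrow> (nat \<Rightarrow> bool) \<Rightarrow> nat \<Rightarrow> nat \<Rightarrow> bool" where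
  "sec L z w t = z ((w - 1) * L + t)"

definition index_of :: "nat \<Rightarrow> (nat \<Rightarrow> bool) \<Rightarrow> nat" where
  "index_of L c = (THE l. l \<in> {1..2^L} \<and> (\<forall>t\<in>{1..L}. bin L l t = c t))"

definition defectives_at :: "nat \<Rightarrow> (nat \<Rightarrow> nat \<Rightarrow> bool) \<Rightarrow> (nat \<Rightarrow> bool) \<Rightarrow> nat \<Rightarrow> nat set" where
  "defectives_at L T x k = {l \<in> {1..2^L}. T k l \<and> x l}"

definition singleton_test :: "nat \<Rightarrow> (nat \<Rightarrow> bool) \<Rightarrow> nat option" where
  "singleton_test L z =
     (if card {r \<in> {1..6*L}. z r} = 3 * L then Some (index_of L (sec L z 1)) else None)"

definition doubleton_test :: "nat \<Rightarrow> (nat \<Rightarrow> nat) \<Rightarrow> (nat \<Rightarrow> nat) \<Rightarrow> (nat \<Rightarrow> bool) \<Rightarrow> nat \<Rightarrow> nat option" where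
  "doubleton_test L i j z l0 =
     (let r = (\<lambda>w::nat. if w = 1 then bin L l0 else if w = 2 then bin L (i l0) else bin L (j l0));
          c = (\<lambda>w t. if r w t then \<not> sec L z (2 * w) t else sec L z (2 * w - 1) t);
          l1 = index_of L (c 1); l2 = index_of L (c 2); l3 = index_of L (c 3)
      in if i l1 = l2 \<and> j l1 = l3 then Some l1 else None)"

end

theory Submission
  imports Defs
begin


lemma bin_inj:
  assumes "l \<in> {1..2^L}" "l' \<in> {1..2^L}" "\<forall>t\<in>{1..L}. bin L l t = bin L l' t"
  shows "l = l'"
proof -
  have a: "l - 1 < 2^L" "l' - 1 < 2^L" using assms by auto
  have "\<forall>n. bit (l - 1) n = bit (l' - 1) n"
  proof
    fix n
    show "bit (l - 1) n = bit (l' - 1) n"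
    proof (cases "n < L")
      case True
      then have "Suc n \<in> {1..L}" by auto
      then have "bin L l (Suc n) = bin L l' (Suc n)" using assms(3) by blast
      then show ?thesis using True unfolding bin_def by simp
    next
      case False
      have "take_bit L (l-1) = l-1" "take_bit L (l'-1) = l'-1" using a by (auto simp: take_bit_nat_eq_self_iff)
      then show ?thesis using False by (metis bit_take_bit_iff)
    qed
  qed
  then have "l - 1 = l' - 1" by (simp add: bit_eq_iff)
  then show ?thesis using assms by auto
qed

lemma bin_surj: "\<exists>l\<in>{1..2^L}. \<forall>t\<in>{1..L}. bin L l t = c t"
proof -
  let ?R = "\<lambda>l. restrict (bin L l) {1..L}"
  have inj: "inj_on ?R {1..2^L}"
    by (rule inj_onI) (metis bin_inj restrict_apply')
  have sub: "?R ` {1..2^L} \<subseteq> PiE {1..L} (\<lambda>_. UNIV)" by auto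
  have c1: "card (?R ` {1..2^L}) = 2^L" using card_image[OF inj] by simp
  have c2: "card (PiE {1..L} (\<lambda>_. UNIV :: bool set)) = 2^L" by (simp add: card_PiE)
  have "?R ` {1..2^L} = PiE {1..L} (\<lambda>_. UNIV)"
    by (rule card_subset_eq) (use sub c1 c2 in \<open>auto simp: finite_PiE\<close>)
  moreover have "restrict c {1..L} \<in> PiE {1..L} (\<lambda>_. UNIV)" by auto
  ultimately obtain l where "l \<in> {1..2^L}" "?R l = restrict c {1..L}" by (metis (no_types, lifting) imageE)
  then show ?thesis by (metis restrict_apply')
qed

lemma index_of_prop:
  "index_of L c \<in> {1..2^L} \<and> (\<forall>t\<in>{1..L}. bin L (index_of L c) t = c t)"
proof -
  have "\<exists>!l. l \<in> {1..2^L} \<and> (\<forall>t\<in>{1..L}. bin L l t = c t)"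
    using bin_surj[of L c] bin_inj[of _ L] by metis
  then show ?thesis unfolding index_of_def by (rule theI')
qed

lemma index_of_eq:
  assumes "l \<in> {1..2^L}" "\<forall>t\<in>{1..L}. bin L l t = c t"
  shows "index_of L c = l"
  using index_of_prop[of L c] assms bin_inj[of "index_of L c" L l] by auto

lemma index_of_cong:
  assumes "\<forall>t\<in>{1..L}. c t = c' t"
  shows "index_of L c = index_of L c'"
  using index_of_prop[of L c] index_of_eq[of "index_of L c" L c'] assms by auto

definition sgw :: "nat \<Rightarrow> (nat \<Rightarrow> nat) \<Rightarrow> (nat \<Rightarrow> nat) \<Rightarrow> nat \<Rightarrow> nat \<Rightarrow> nat \<Rightarrow> bool" where
 "sgw L i j l w t = (if w = 1 then bin L l t else if w = 2 then \<not> bin L l t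
   else if w = 3 then bin L (i l) t else if w = 4 then \<not> bin L (i l) t
   else if w = 5 then bin L (j l) t else \<not> bin L (j l) t)"

lemma sig_at:
  assumes t: "t \<in> {1..L}" and w: "w \<in> {1..6}"
  shows "sig L i j l ((w-1)*L+t) = sgw L i j l w t"
proof -
  have L: "L > 0" using t by auto
  have "(w-1)*L \<le> 5*L" using w by (intro mult_le_mono1) auto
  then have r: "(w-1)*L+t \<in> {1..6*L}" using t by (simp only: atLeastAtMost_iff, linarith)
  have e: "(w-1)*L+t-1 = (t-1) + (w-1)*L" using t by auto
  have d: "((w-1)*L+t-1) div L + 1 = w"
  proof -
    have "(t-1 + (w-1)*L) div L = (w-1) + (t-1) div L" using L by (rule div_mult_self1[OF gr_implies_not0])
    moreover have "(t-1) div L = 0" using t by (intro div_less) auto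
    ultimately have "(t-1 + (w-1)*L) div L = w-1" by simp
    then show ?thesis unfolding e using w by simp
  qed
  have m: "((w-1)*L+t-1) mod L + 1 = t"
  proof -
    have "(t-1 + (w-1)*L) mod L = (t-1) mod L" by (rule mod_mult_self1)
    moreover have "(t-1) mod L = t-1" using t by (intro mod_less) auto
    ultimately have "(t-1 + (w-1)*L) mod L = t-1" by (rule trans)
    then show ?thesis unfolding e using t by (simp only:) simp
  qed
  show ?thesis unfolding sig_def Let_def d m sgw_def using r by simp
qed

lemma sec_meas:
  assumes t: "t \<in> {1..L}" and w: "w \<in> {1..6}"
  shows "sec L (meas L T x i j k) w t = (\<exists>l\<in>defectives_at L T x k. sgw L i j l w t)"
  unfolding sec_def meas_def defectives_at_def using sig_at[OF t w] by auto

lemma card_split: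
  "card {r\<in>{1..Suc m * L}. z r} = card {r\<in>{1..m*L}. z r} + card {t\<in>{1..L}. sec L z (Suc m) t}"
proof -
  have eq: "{r\<in>{1..Suc m * L}. z r} = {r\<in>{1..m*L}. z r} \<union> (\<lambda>t. m*L+t) ` {t\<in>{1..L}. z (m*L+t)}"
  proof (rule set_eqI, rule iffI)
    fix r assume "r \<in> {r\<in>{1..Suc m * L}. z r}"
    then show "r \<in> {r\<in>{1..m*L}. z r} \<union> (\<lambda>t. m*L+t) ` {t\<in>{1..L}. z (m*L+t)}"
    proof (cases "r \<le> m*L")
      case False
      then have "r = m*L + (r - m*L)" by simp
      then show ?thesis using \<open>r \<in> _\<close> False by (intro UnI2 image_eqI[where x="r - m*L"]) auto
    qed auto
  qed auto
  have "card {r\<in>{1..Suc m * L}. z r} = card {r\<in>{1..m*L}. z r} + card ((\<lambda>t. m*L+t) ` {t\<in>{1..L}. z (m*L+t)})"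
    unfolding eq by (rule card_Un_disjoint) auto
  also have "card ((\<lambda>t. m*L+t) ` {t\<in>{1..L}. z (m*L+t)}) = card {t\<in>{1..L}. z (m*L+t)}"
    by (rule card_image) (auto simp: inj_on_def)
  finally show ?thesis by (simp add: sec_def)
qed

lemma weight6:
  "card {r\<in>{1..6*L}. z r} = card {t\<in>{1..L}. sec L z 1 t} + card {t\<in>{1..L}. sec L z 2 t}
    + card {t\<in>{1..L}. sec L z 3 t} + card {t\<in>{1..L}. sec L z 4 t}
    + card {t\<in>{1..L}. sec L z 5 t} + card {t\<in>{1..L}. sec L z 6 t}"
  using card_split[of 5 L z] card_split[of 4 L z] card_split[of 3 L z] card_split[of 2 L z]
    card_split[of 1 L z] card_split[of 0 L z]
  by (simp add: eval_nat_numeral)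

lemma pair_card:
  assumes "D \<noteq> {}"
  shows "card {t\<in>{1..L}. \<exists>l\<in>D. P l t} + card {t\<in>{1..L}. \<exists>l\<in>D. \<not> P l t}
     = L + card ({t\<in>{1..L}. \<exists>l\<in>D. P l t} \<inter> {t\<in>{1..L}. \<exists>l\<in>D. \<not> P l t})"
proof -
  have "{t\<in>{1..L}. \<exists>l\<in>D. P l t} \<union> {t\<in>{1..L}. \<exists>l\<in>D. \<not> P l t} = {1..L}"
    using assms by auto
  then show ?thesis using card_Un_Int[of "{t\<in>{1..L}. \<exists>l\<in>D. P l t}" "{t\<in>{1..L}. \<exists>l\<in>D. \<not> P l t}"]
    by simp
qed

lemma secset:
  assumes "w \<in> {1..6}"
  shows "{t\<in>{1..L}. sec L (meas L T x i j k) w t} = {t\<in>{1..L}. \<exists>l\<in>defectives_at L T x k. sgw L i j l w t}"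
  using sec_meas[OF _ assms] by auto

lemma defs_sub: "defectives_at L T x k \<subseteq> {1..2^L}" "finite (defectives_at L T x k)"
  unfolding defectives_at_def by auto

lemma weight_iff:
  assumes L: "L \<ge> 1"
  shows "card {r\<in>{1..6*L}. meas L T x i j k r} = 3*L \<longleftrightarrow> (\<exists>l. defectives_at L T x k = {l})"
proof -
  define D where "D = defectives_at L T x k"
  define z where "z = meas L T x i j k"
  let ?A = "\<lambda>P. {t\<in>{1..L}. \<exists>l\<in>D. P l t}"
  have S: "{t\<in>{1..L}. sec L z w t} = ?A (\<lambda>l t. sgw L i j l w t)" if "w \<in> {1..6}" for w
    unfolding z_def D_def by (rule secset[OF that])
  have W: "card {r\<in>{1..6*L}. z r} =
      card (?A (\<lambda>l t. bin L l t)) + card (?A (\<lambda>l t. \<not> bin L l t)) +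
      card (?A (\<lambda>l t. bin L (i l) t)) + card (?A (\<lambda>l t. \<not> bin L (i l) t)) +
      card (?A (\<lambda>l t. bin L (j l) t)) + card (?A (\<lambda>l t. \<not> bin L (j l) t))"
    unfolding weight6 using S[of 1] S[of 2] S[of 3] S[of 4] S[of 5] S[of 6]
    by (simp add: sgw_def)
  show ?thesis
  proof (cases "D = {}")
    case True
    then have "card {r\<in>{1..6*L}. z r} = 0" unfolding W by simp
    then have "card {r\<in>{1..6*L}. z r} \<noteq> 3*L" using L by (metis mult_is_0 nat_less_le not_one_le_zero zero_neq_numeral)
    moreover have "\<not>(\<exists>l. defectives_at L T x k = {l})" using True D_def by auto
    ultimately show ?thesis unfolding z_def by blast
  next
    case False
    let ?I = "\<lambda>P. ?A P \<inter> ?A (\<lambda>l t. \<not> P l t)"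
    have W2: "card {r\<in>{1..6*L}. z r} = 3*L + card (?I (\<lambda>l t. bin L l t))
       + card (?I (\<lambda>l t. bin L (i l) t)) + card (?I (\<lambda>l t. bin L (j l) t))"
      unfolding W using pair_card[OF False, of L "\<lambda>l t. bin L l t"]
        pair_card[OF False, of L "\<lambda>l t. bin L (i l) t"] pair_card[OF False, of L "\<lambda>l t. bin L (j l) t"]
      by simp
    show ?thesis
    proof (cases "\<exists>l. D = {l}")
      case True
      then obtain l where l: "D = {l}" by blast
      have "card {r\<in>{1..6*L}. z r} = 3*L" unfolding W2 l by (simp, blast)
      then show ?thesis using True unfolding z_def D_def by simp
    next
      case F2: False
      obtain l where l: "l \<in> D" using False by blast
      obtain l' where l': "l' \<in> D" "l' \<noteq> l" using F2 l by blast
      have "l \<in> {1..2^L}" "l' \<in> {1..2^L}" using l l' defs_sub(1)[of L T x k] unfolding D_def by auto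
      then obtain t where t: "t \<in> {1..L}" "bin L l t \<noteq> bin L l' t"
        using bin_inj[of l L l'] l'(2) by metis
      have "t \<in> ?I (\<lambda>l t. bin L l t)" using t l l'(1) by (cases "bin L l t") auto
      then have "card (?I (\<lambda>l t. bin L l t)) > 0" by (auto simp: card_gt_0_iff)
      then have "card {r\<in>{1..6*L}. z r} \<noteq> 3*L" using W2 by linarith
      then show ?thesis using F2 unfolding z_def D_def by simp
    qed
  qed
qed

lemma singleton_part:
  assumes L: "L \<ge> 1"
  shows "singleton_test L (meas L T x i j k) = Some l \<longleftrightarrow> defectives_at L T x k = {l}"
proof -
  have key: "index_of L (sec L (meas L T x i j k) 1) = l'" if "defectives_at L T x k = {l'}" for l'
  proof (rule index_of_eq)
    show "l' \<in> {1..2^L}" using defs_sub(1)[of L T x k] that by auto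
    show "\<forall>t\<in>{1..L}. bin L l' t = sec L (meas L T x i j k) 1 t"
      using sec_meas[of _ L 1] that by (simp add: sgw_def)
  qed
  show ?thesis
  proof (cases "\<exists>l. defectives_at L T x k = {l}")
    case True
    then obtain l' where l': "defectives_at L T x k = {l'}" by blast
    then show ?thesis unfolding singleton_test_def using weight_iff[OF L, of T x i j k] key[OF l'] by auto
  next
    case False
    then show ?thesis unfolding singleton_test_def using weight_iff[OF L, of T x i j k] by auto
  qed
qed

definition cvec :: "nat \<Rightarrow> nat set \<Rightarrow> nat \<Rightarrow> (nat \<Rightarrow> nat) \<Rightarrow> nat \<Rightarrow> bool" where
  "cvec L D l0 f t = (if bin L (f l0) t then \<not> (\<exists>l\<in>D. \<not> bin L (f l) t) else (\<exists>l\<in>D. bin L (f l) t))"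

lemma dt_unfold:
  "doubleton_test L i j (meas L T x i j k) l0 =
    (let l1 = index_of L (cvec L (defectives_at L T x k) l0 (\<lambda>l. l)) in
     if i l1 = index_of L (cvec L (defectives_at L T x k) l0 i) \<and>
        j l1 = index_of L (cvec L (defectives_at L T x k) l0 j) then Some l1 else None)"
proof -
  define z where "z = meas L T x i j k"
  define D where "D = defectives_at L T x k"
  have sm: "sec L z w t = (\<exists>l\<in>D. sgw L i j l w t)" if "t \<in> {1..L}" "w \<in> {1..6}" for w t
    unfolding z_def D_def by (rule sec_meas[OF that])
  have e1: "index_of L (\<lambda>t. if bin L l0 t then \<not> sec L z (2*1) t else sec L z (2*1-1) t) = index_of L (cvec L D l0 (\<lambda>l. l))"
    by (rule index_of_cong) (simp add: sm sgw_def cvec_def)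
  have e2: "index_of L (\<lambda>t. if bin L (i l0) t then \<not> sec L z (2*2) t else sec L z (2*2-1) t) = index_of L (cvec L D l0 i)"
    by (rule index_of_cong) (simp add: sm sgw_def cvec_def)
  have e3: "index_of L (\<lambda>t. if bin L (j l0) t then \<not> sec L z (2*3) t else sec L z (2*3-1) t) = index_of L (cvec L D l0 j)"
    by (rule index_of_cong) (simp add: sm sgw_def cvec_def)
  show ?thesis unfolding doubleton_test_def Let_def z_def[symmetric] D_def[symmetric]
    by (simp add: e1[simplified] e2[simplified] e3[simplified])
qed

lemma doubleton_part:
  assumes "i \<in> seqs L" "j \<in> seqs L" "defectives_at L T x k = {l0, ls}"
  shows "doubleton_test L i j (meas L T x i j k) l0 = Some ls"
proof -
  have ls: "ls \<in> {1..2^L}" using defs_sub(1)[of L T x k] assms(3) by auto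
  have il: "i ls \<in> {1..2^L}" "j ls \<in> {1..2^L}" using assms ls unfolding seqs_def by auto
  have c: "cvec L {l0, ls} l0 f t = bin L (f ls) t" for f t
    by (auto simp: cvec_def)
  have "index_of L (cvec L {l0, ls} l0 f) = f ls" if "f ls \<in> {1..2^L}" for f
    by (rule index_of_eq[OF that]) (simp add: c)
  then have "index_of L (cvec L {l0, ls} l0 (\<lambda>l. l)) = ls" "index_of L (cvec L {l0, ls} l0 i) = i ls"
     "index_of L (cvec L {l0, ls} l0 j) = j ls" using ls il by auto
  then show ?thesis unfolding dt_unfold assms(3) Let_def by simp
qed

lemma cvec_cong:
  assumes "l0 \<in> D" "\<forall>l\<in>D. f l = g l"
  shows "cvec L D l0 f = cvec L D l0 g"
  using assms unfolding cvec_def fun_eq_iff by auto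

lemma prob_part:
  assumes l0: "l0 \<in> defectives_at L T x k"
  shows "measure_pmf.prob (pmf_of_set (seqs L \<times> seqs L))
         {(i, j). \<exists>l. doubleton_test L i j (meas L T x i j k) l0 = Some l \<and>
                      l \<notin> defectives_at L T x k}
       \<le> 1 / (real (2^L))^2"
proof -
  define D where "D = defectives_at L T x k"
  define n :: nat where "n = 2^L"
  define S where "S = seqs L"
  define F where "F f = index_of L (cvec L D l0 f)" for f
  define l1 where "l1 = F (\<lambda>l. l)"
  define E where "E = {(i, j). \<exists>l. doubleton_test L i j (meas L T x i j k) l0 = Some l \<and>
                      l \<notin> defectives_at L T x k}"
  have n0: "n > 0" unfolding n_def by simp
  have finS: "finite S" unfolding S_def seqs_def by (simp add: finite_PiE)
  have cardS: "card S = n ^ n" unfolding S_def seqs_def n_def by (simp add: card_PiE)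
  then have NS: "card S > 0" using n0 by simp
  then have neS: "S \<noteq> {}" by auto
  have hE: "E \<subseteq> {(i,j). l1 \<notin> D \<and> i l1 = F i \<and> j l1 = F j}"
    unfolding E_def by (auto simp: dt_unfold Let_def l1_def F_def D_def split: if_splits)
  have l1r: "l1 \<in> {1..n}" unfolding l1_def F_def n_def using index_of_prop by blast
  have prob: "measure_pmf.prob (pmf_of_set (S \<times> S)) E = card ((S \<times> S) \<inter> E) / card (S \<times> S)"
    by (rule measure_pmf_of_set) (use neS finS in auto)
  have main: "real (card ((S \<times> S) \<inter> E)) / real (card (S \<times> S)) \<le> 1 / (real n)^2"
  proof (cases "l1 \<in> D")
    case True
    then have "E = {}" using hE by auto
    then show ?thesis by simp
  next
    case False
    define A where "A = {i\<in>S. i l1 = F i}"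
    have sub: "(S \<times> S) \<inter> E \<subseteq> A \<times> A" using hE unfolding A_def by auto
    have finA: "finite A" unfolding A_def using finS by auto
    have c1: "card ((S \<times> S) \<inter> E) \<le> card A * card A"
      using card_mono[OF _ sub] finA by (simp add: card_cartesian_product)
    have Fc: "F f = F g" if "\<forall>l\<in>D. f l = g l" for f g
      unfolding F_def using cvec_cong[OF _ that] l0 D_def by simp
    let ?phi = "\<lambda>(i, v). i(l1 := v)"
    have inj: "inj_on ?phi (A \<times> {1..n})"
    proof (rule inj_onI)
      fix p q
      assume a0: "p \<in> A \<times> {1..n}" "q \<in> A \<times> {1..n}" and eq0: "?phi p = ?phi q"
      obtain i v where p: "p = (i, v)" by (cases p)
      obtain i' v' where q: "q = (i', v')" by (cases q)
      have a: "(i, v) \<in> A \<times> {1..n}" "(i', v') \<in> A \<times> {1..n}" using a0 p q by auto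
      have eq: "i(l1 := v) = i'(l1 := v')" using eq0 p q by simp
      have vv: "v = v'" using fun_cong[OF eq, of l1] by simp
      have "\<forall>l\<in>D. i l = i' l"
      proof
        fix l assume "l \<in> D"
        then have "l \<noteq> l1" using False by auto
        then show "i l = i' l" using fun_cong[OF eq, of l] by simp
      qed
      then have "F i = F i'" by (rule Fc)
      then have "i l1 = i' l1" using a unfolding A_def by auto
      then have "i = i'" using eq by (metis fun_upd_triv fun_upd_upd)
      then show "p = q" using vv p q by simp
    qed
    have img: "?phi ` (A \<times> {1..n}) \<subseteq> S"
      using l1r unfolding A_def S_def seqs_def n_def by (auto simp: PiE_def Pi_def extensional_def)
    have "card (A \<times> {1..n}) \<le> card S" by (rule card_inj_on_le[OF inj img finS])
    then have an: "card A * n \<le> card S" by (simp add: card_cartesian_product)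
    then have anr: "real (card A) * real n \<le> real (card S)" by (metis of_nat_le_iff of_nat_mult)
    have q: "real (card A) / real (card S) \<le> 1 / real n"
      using anr n0 NS by (simp add: field_simps)
    have q0: "0 \<le> real (card A) / real (card S)" by simp
    have "real (card ((S \<times> S) \<inter> E)) / real (card (S \<times> S)) \<le> real (card A * card A) / real (card S * card S)"
      using c1 NS by (simp add: card_cartesian_product divide_right_mono del: of_nat_mult)
    also have "\<dots> = (real (card A) / real (card S))^2" by (simp add: power2_eq_square)
    also have "\<dots> \<le> (1 / real n)^2" using q q0 by (rule power_mono)
    finally show ?thesis by (simp add: power_divide)
  qed
  show ?thesis using prob main unfolding E_def S_def D_def n_def by simp
qed


theorem lemma1:
  fixes L K M k :: nat and T :: "nat \<Rightarrow> nat \<Rightarrow> bool" and x :: "nat \<Rightarrow> bool"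
  assumes "L \<ge> 1"
    and "card {l \<in> {1..2^L}. x l} = K"
    and "k \<in> {1..M}"
  shows
   "(\<forall>i j. i \<in> seqs L \<longrightarrow> j \<in> seqs L \<longrightarrow>
       (\<forall>l. singleton_test L (meas L T x i j k) = Some l \<longleftrightarrow> defectives_at L T x k = {l}))
    \<and>
    (\<forall>i j l0 ls. i \<in> seqs L \<longrightarrow> j \<in> seqs L \<longrightarrow> l0 \<noteq> ls \<longrightarrow>
       defectives_at L T x k = {l0, ls} \<longrightarrow>
       doubleton_test L i j (meas L T x i j k) l0 = Some ls)
    \<and>
    (\<forall>l0. l0 \<in> defectives_at L T x k \<longrightarrow> card (defectives_at L T x k - {l0}) \<ge> 2 \<longrightarrow>
       measure_pmf.prob (pmf_of_set (seqs L \<times> seqs L))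
         {(i, j). \<exists>l. doubleton_test L i j (meas L T x i j k) l0 = Some l \<and>
                      l \<notin> defectives_at L T x k}
       \<le> 1 / (real (2^L))^2)"
  proof (intro conjI allI impI)
  fix i j l assume "i \<in> seqs L" "j \<in> seqs L"
  show "singleton_test L (meas L T x i j k) = Some l \<longleftrightarrow> defectives_at L T x k = {l}"
    by (rule singleton_part[OF assms(1)])
next
  fix i j l0 ls assume "i \<in> seqs L" "j \<in> seqs L" "l0 \<noteq> ls" "defectives_at L T x k = {l0, ls}"
  then show "doubleton_test L i j (meas L T x i j k) l0 = Some ls" by (intro doubleton_part)
next
  fix l0 assume "l0 \<in> defectives_at L T x k"
  then show "measure_pmf.prob (pmf_of_set (seqs L \<times> seqs L))
         {(i, j). \<exists>l. doubleton_test L i j (meas L T x i j k) l0 = Some l \<and>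
                      l \<notin> defectives_at L T x k}
       \<le> 1 / (real (2^L))^2" by (rule prob_part)
qed

end
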